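(* Let $r\in(0,1)$ be such that $G_m'(t)<0$ for all $t\in[-r,r]$ (such $r$ exists). Then for $P$-a.e. $\omega$ there exists $N_5(\omega)\in\mathbb N$ such that for every $n>N_5(\omega)$, the set $C_{Q_n(\omega)}\cap[-r,r]$ consists of exactly one point.
   Context: Fix $m>1/2$. Let $c_m:=\left(\int_{\mathbb R}(1+x^2)^{-m}dx\right)^{-1}$ and $\nu_m(dx):=c_m(1+x^2)^{-m}dx$. Let $(X_n)_{n\ge1}$ be i.i.d. random variables on $(\Omega,\mathcal F,P)$ with law $\nu_m$. Let $L_n(t):=\frac1n\sum_{i=1}^n\log(1+(X_i-t)^2)$ and $C_{Q_n(\omega)}:=\{t\in\mathbb R: L_n(t)(\omega)=\min_{s\in\mathbb R}L_n(s)(\omega)\}$. Let $D(x,t):=\dfrac{x-t}{1+(x-t)^2}$ and $G_m(t):=\int_{\mathbb R}D(x,t)\,\nu_m(dx)$. *)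

theory Defs
  imports "HOL-Probability.Probability"
begin

definition c_m :: "real \<Rightarrow> real" where
  "c_m m = 1 / (LINT x|lborel. (1 + x\<^sup>2) powr (- m))"

definition nu_m :: "real \<Rightarrow> real measure" where
  "nu_m m = density lborel (\<lambda>x. ennreal (c_m m * (1 + x\<^sup>2) powr (- m)))"

definition D :: "real \<Rightarrow> real \<Rightarrow> real" where
  "D x t = (x - t) / (1 + (x - t)\<^sup>2)"

definition G_m :: "real \<Rightarrow> real \<Rightarrow> real" where
  "G_m m t = (LINT x|nu_m m. D x t)"

definition L_n :: "(nat \<Rightarrow> 'a \<Rightarrow> real) \<Rightarrow> nat \<Rightarrow> real \<Rightarrow> 'a \<Rightarrow> real" where
  "L_n X n t \<omega> = (1 / real n) * (\<Sum>i=1..n. ln (1 + (X i \<omega> - t)\<^sup>2))"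

definition C_Q :: "(nat \<Rightarrow> 'a \<Rightarrow> real) \<Rightarrow> nat \<Rightarrow> 'a \<Rightarrow> real set" where
  "C_Q X n \<omega> = {t. \<forall>s. L_n X n t \<omega> \<le> L_n X n s \<omega>}"

end

theory Submission
  imports Defs
begin

lemma abs_le_1_sq: "\<bar>u::real\<bar> \<le> 1 + u\<^sup>2"
proof (cases "\<bar>u\<bar> \<le> 1")
  case True then show ?thesis using zero_le_power2[of u] by linarith
next
  case False
  then have "\<bar>u\<bar> * 1 \<le> \<bar>u\<bar> * \<bar>u\<bar>" by (intro mult_left_mono) auto
  then show ?thesis by (simp add: power2_eq_square abs_mult[symmetric])
qed
lemma D_abs_le: "\<bar>D x t\<bar> \<le> 1"
proof -
  have p: "1 + (x-t)\<^sup>2 > 0" by (simp add: add_pos_nonneg)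
  have "\<bar>x - t\<bar> \<le> 1 + (x-t)\<^sup>2" by (rule abs_le_1_sq)
  then have "\<bar>x - t\<bar> / (1 + (x-t)\<^sup>2) \<le> 1" using p by simp
  then show ?thesis using p by (simp add: D_def abs_divide)
qed

definition phi :: "real \<Rightarrow> real" where
  "phi u = (u\<^sup>2 - 1) / (1 + u\<^sup>2)\<^sup>2"

lemma phi_abs_le: "\<bar>phi u\<bar> \<le> 1"
proof -
  have p: "1 + u\<^sup>2 > 0" by (simp add: add_pos_nonneg)
  have a: "\<bar>u\<^sup>2 - 1\<bar> \<le> 1 + u\<^sup>2" using zero_le_power2[of u] by (simp add: abs_le_iff)
  have "1 + u\<^sup>2 \<le> (1 + u\<^sup>2)^2" by (rule self_le_power) auto
  with a have "\<bar>u\<^sup>2 - 1\<bar> \<le> (1 + u\<^sup>2)\<^sup>2" by linarith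
  then have "\<bar>u\<^sup>2 - 1\<bar> / (1 + u\<^sup>2)\<^sup>2 \<le> 1" using p by simp
  then show ?thesis using p by (simp add: phi_def abs_divide)
qed

lemma D_deriv: "((\<lambda>t. D x t) has_real_derivative phi (x - t)) (at t)"
proof -
  have p: "1 + (x-t)\<^sup>2 \<noteq> 0" by (metis add_pos_nonneg zero_le_power2 zero_less_one less_irrefl)
  have f: "((\<lambda>t. x - t) has_real_derivative -1) (at t)" by (auto intro!: derivative_eq_intros)
  have g: "((\<lambda>t. 1 + (x-t)\<^sup>2) has_real_derivative (2 * (x - t) * (-1))) (at t)"
    by (rule derivative_eq_intros refl | simp)+
  have "((\<lambda>t. (x - t) / (1 + (x - t)\<^sup>2)) has_real_derivative
     ((-1) * (1 + (x - t)\<^sup>2) - (x - t) * (2 * (x - t) * (-1))) / ((1 + (x - t)\<^sup>2) * (1 + (x - t)\<^sup>2))) (at t)"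
    by (rule DERIV_divide[OF f g p])
  moreover have "((-1) * (1 + (x - t)\<^sup>2) - (x - t) * (2 * (x - t) * (-1))) / ((1 + (x - t)\<^sup>2) * (1 + (x - t)\<^sup>2)) = phi (x - t)"
    unfolding phi_def power2_eq_square by (simp add: algebra_simps)
  ultimately show ?thesis by (simp add: D_def)
qed


lemma lip_from_deriv:
  fixes f f' :: "real \<Rightarrow> real"
  assumes "\<And>x. (f has_real_derivative f' x) (at x)" "\<And>x. \<bar>f' x\<bar> \<le> L"
  shows "\<bar>f s - f t\<bar> \<le> L * \<bar>s - t\<bar>"
proof -
  have *: "\<bar>f s - f t\<bar> \<le> L * \<bar>s - t\<bar>" if ts: "t < s" for s t
  proof -
    obtain z where "t < z" "z < s" "f s - f t = (s - t) * f' z"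
      using MVT2[OF ts, of f f'] assms(1) by blast
    then show ?thesis using assms(2)[of z] ts
      by (simp add: abs_mult mult_right_mono mult.commute)
  qed
  show ?thesis
  proof (cases "t < s")
    case True then show ?thesis using * by blast
  next
    case False
    show ?thesis
    proof (cases "s < t")
      case True then have "\<bar>f t - f s\<bar> \<le> L * \<bar>t - s\<bar>" using *[of s t] by blast
      then show ?thesis by (simp add: abs_minus_commute)
    next
      case False then have "s = t" using \<open>\<not> t < s\<close> by simp
      then show ?thesis by simp
    qed
  qed
qed

lemma D_lip: "\<bar>D x s - D x t\<bar> \<le> 1 * \<bar>s - t\<bar>"
  by (rule lip_from_deriv[of "\<lambda>t. D x t" "\<lambda>t. phi (x - t)"]) (auto intro: D_deriv phi_abs_le)

definition phi' :: "real \<Rightarrow> real" where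
  "phi' u = (2 * u * (3 - u\<^sup>2)) / (1 + u\<^sup>2) ^ 3"

lemma phi_deriv: "(phi has_real_derivative phi' u) (at u)"
proof -
  have p: "(1 + u\<^sup>2)\<^sup>2 \<noteq> 0" by (metis add_pos_nonneg zero_le_power2 zero_less_one less_irrefl power_not_zero)
  have f: "((\<lambda>u. u\<^sup>2 - 1) has_real_derivative 2 * u) (at u)"
    by (rule derivative_eq_intros refl | simp)+
  have g: "((\<lambda>u. (1 + u\<^sup>2)\<^sup>2) has_real_derivative (2 * (1 + u\<^sup>2) * (2 * u))) (at u)"
    by (rule derivative_eq_intros refl | simp)+
  have "((\<lambda>u. (u\<^sup>2 - 1) / (1 + u\<^sup>2)\<^sup>2) has_real_derivative
     ((2 * u) * (1 + u\<^sup>2)\<^sup>2 - (u\<^sup>2 - 1) * (2 * (1 + u\<^sup>2) * (2 * u))) / ((1 + u\<^sup>2)\<^sup>2 * (1 + u\<^sup>2)\<^sup>2)) (at u)"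
    by (rule DERIV_divide[OF f g p])
  moreover have "((2 * u) * (1 + u\<^sup>2)\<^sup>2 - (u\<^sup>2 - 1) * (2 * (1 + u\<^sup>2) * (2 * u))) / ((1 + u\<^sup>2)\<^sup>2 * (1 + u\<^sup>2)\<^sup>2) = phi' u"
  proof -
    have q: "1 + u\<^sup>2 \<noteq> 0" using p by auto
    have "((2 * u) * (1 + u\<^sup>2)\<^sup>2 - (u\<^sup>2 - 1) * (2 * (1 + u\<^sup>2) * (2 * u))) = (2 * u * (3 - u\<^sup>2)) * (1 + u\<^sup>2)"
      unfolding power2_eq_square by (simp add: algebra_simps)
    moreover have "(1 + u\<^sup>2)\<^sup>2 * (1 + u\<^sup>2)\<^sup>2 = (1 + u\<^sup>2) ^ 3 * (1 + u\<^sup>2)"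
      by (simp add: power2_eq_square power3_eq_cube)
    ultimately show ?thesis using q by (simp add: phi'_def)
  qed
  ultimately show ?thesis unfolding phi_def[abs_def] by simp
qed

lemma phi'_abs_le: "\<bar>phi' u\<bar> \<le> 6"
proof -
  have p: "1 + u\<^sup>2 > 0" by (simp add: add_pos_nonneg)
  have a: "\<bar>u\<bar> \<le> 1 + u\<^sup>2" by (rule abs_le_1_sq)
  have b: "\<bar>3 - u\<^sup>2\<bar> \<le> 3 * (1 + u\<^sup>2)" using zero_le_power2[of u] by (simp add: abs_le_iff)
  have "\<bar>2 * u * (3 - u\<^sup>2)\<bar> = 2 * (\<bar>u\<bar> * \<bar>3 - u\<^sup>2\<bar>)" by (simp add: abs_mult)
  also have "\<dots> \<le> 2 * ((1 + u\<^sup>2) * (3 * (1 + u\<^sup>2)))"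
    using a b by (intro mult_left_mono mult_mono) auto
  also have "\<dots> = 6 * (1 + u\<^sup>2)^2" by (simp add: power2_eq_square)
  also have "\<dots> \<le> 6 * (1 + u\<^sup>2)^3"
    using p by (intro mult_left_mono power_increasing) auto
  finally have "\<bar>2 * u * (3 - u\<^sup>2)\<bar> / (1 + u\<^sup>2)^3 \<le> 6" using p by (simp add: divide_le_eq)
  then show ?thesis using p by (simp add: phi'_def abs_divide)
qed

lemma phi_lip: "\<bar>phi u - phi v\<bar> \<le> 6 * \<bar>u - v\<bar>"
  by (rule lip_from_deriv[OF phi_deriv phi'_abs_le])

lemma phi_shift_lip: "\<bar>phi (x - s) - phi (x - t)\<bar> \<le> 6 * \<bar>s - t\<bar>"
  using phi_lip[of "x - s" "x - t"] by (simp add: abs_minus_commute)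



lemma slln_bounded:
  fixes M :: "'a measure" and X :: "nat \<Rightarrow> 'a \<Rightarrow> real" and N :: "real measure"
  assumes P: "prob_space M"
    and ind: "prob_space.indep_vars M (\<lambda>_. borel) X {1..}"
    and dist: "\<And>i. i \<ge> 1 \<Longrightarrow> distr M borel (X i) = N"
    and g[measurable]: "g \<in> borel_measurable borel" and gB: "\<And>x. \<bar>g x\<bar> \<le> B"
    and e: "e > 0"
  shows "AE \<omega> in M. eventually (\<lambda>n. \<bar>(\<Sum>i=1..n. g (X i \<omega>)) / real n - integral\<^sup>L N g\<bar> < e) sequentially"
proof -
  interpret prob_space M by (rule P)
  have rv[measurable]: "X i \<in> borel_measurable M" if "i \<ge> 1" for i
    using ind that unfolding indep_vars_def by auto
  define Y where "Y = (\<lambda>i \<omega>. g (X i \<omega>))"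
  define B' where "B' = \<bar>B\<bar> + 1"
  have B': "B' > 0" by (simp add: B'_def add_nonneg_pos)
  define \<mu> where "\<mu> = expectation (Y 1)"
  have Ym[measurable]: "Y i \<in> borel_measurable M" if "i \<ge> 1" for i
    unfolding Y_def using that by measurable
  have distrY: "distr M borel (Y i) = distr N borel g" if "i \<ge> 1" for i
  proof -
    have "distr M borel (Y i) = distr M borel (g \<circ> X i)" by (simp add: Y_def comp_def)
    also have "\<dots> = distr (distr M borel (X i)) borel g"
      by (rule distr_distr[symmetric]) (use that in auto)
    finally show ?thesis using dist[OF that] by simp
  qed
  have indY: "indep_vars (\<lambda>_. borel) Y {1..}"
    unfolding Y_def by (rule indep_vars_compose2[OF ind]) auto
  have hoeff: "prob {\<omega>\<in>space M. \<bar>(\<Sum>i\<in>{1..n}. Y i \<omega>) / real (card {1..n}) - \<mu>\<bar> \<ge> e}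
      \<le> 2 * exp (-2 * real (card {1..n}) * e\<^sup>2 / (B' - (-B'))\<^sup>2)" if n: "n \<ge> 1" for n
  proof -
    interpret H: Hoeffding_ineq_iid M "{1..n}" Y "Y 1" "-B'" B' \<mu>
    proof unfold_locales
      show "finite {1..n}" by simp
      show "indep_vars (\<lambda>_. borel) Y {1..n}"
        by (rule indep_vars_subset[OF indY]) auto
      show "distr M borel (Y i) = distr M borel (Y 1)" if "i \<in> {1..n}" for i
        using distrY[of i] distrY[of 1] that by simp
      show "random_variable borel (Y 1)" by simp
      show "AE x in M. Y 1 x \<in> {- B'..B'}"
      proof (rule AE_I2)
        fix x show "Y 1 x \<in> {- B'..B'}" using gB[of "X 1 x"] by (auto simp: Y_def B'_def abs_le_iff)
      qed
      show "\<mu> \<equiv> expectation (Y 1)" by (simp add: \<mu>_def)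
    qed
    show ?thesis
      using H.Hoeffding_ineq_abs_ge'[of e] e B' n by simp
  qed
  define c where "c = 2 * e\<^sup>2 / (2 * B')\<^sup>2"
  have c: "c > 0" using e B' by (simp add: c_def)
  define A where "A = (\<lambda>k. {\<omega>\<in>space M. \<bar>(\<Sum>i\<in>{1..Suc k}. Y i \<omega>) / real (Suc k) - \<mu>\<bar> \<ge> e})"
  have Am[measurable]: "A k \<in> sets M" for k
  proof -
    have "(\<lambda>\<omega>. (\<Sum>i\<in>{1..Suc k}. Y i \<omega>)) \<in> borel_measurable M"
      by (intro borel_measurable_sum) auto
    then show ?thesis unfolding A_def by measurable
  qed
  have Ab: "measure M (A k) \<le> 2 * exp (- c) * exp (- c) ^ k" for k
  proof -
    have "measure M (A k) \<le> 2 * exp (-2 * real (card {1..Suc k}) * e\<^sup>2 / (B' - (-B'))\<^sup>2)"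
      using hoeff[of "Suc k"] unfolding A_def by simp
    also have "-2 * real (card {1..Suc k}) * e\<^sup>2 / (B' - (-B'))\<^sup>2 = - c * (Suc k)"
      using B' unfolding c_def by (simp add: field_simps power2_eq_square)
    also have "exp (- c * (Suc k)) = exp (- c) * exp (- c) ^ k"
      by (simp add: exp_of_nat_mult[symmetric] exp_add[symmetric] algebra_simps)
    finally show ?thesis by simp
  qed
  have sum: "summable (\<lambda>k. measure M (A k))"
  proof (rule summable_comparison_test[of _ "\<lambda>k. 2 * exp (- c) * exp (- c) ^ k"])
    show "\<exists>N. \<forall>n\<ge>N. norm (measure M (A n)) \<le> 2 * exp (- c) * exp (- c) ^ n"
      using Ab by auto
    show "summable (\<lambda>k. 2 * exp (- c) * exp (- c) ^ k)"
      using c by (intro summable_mult summable_geometric) auto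
  qed
  have BC: "AE \<omega> in M. eventually (\<lambda>k. \<omega> \<in> space M - A k) sequentially"
    by (rule borel_cantelli_AE1) (use sum in \<open>auto simp: emeasure_eq_measure\<close>)
  have mu_eq: "\<mu> = integral\<^sup>L N g"
  proof -
    have "\<mu> = integral\<^sup>L M (\<lambda>\<omega>. g (X 1 \<omega>))" by (simp add: \<mu>_def Y_def)
    also have "\<dots> = integral\<^sup>L (distr M borel (X 1)) g"
      by (rule integral_distr[symmetric]) auto
    finally show ?thesis using dist[of 1] by simp
  qed
  from BC show ?thesis
  proof (eventually_elim)
    case (elim \<omega>)
    then have "eventually (\<lambda>k. \<bar>(\<Sum>i=1..Suc k. g (X i \<omega>)) / real (Suc k) - integral\<^sup>L N g\<bar> < e) sequentially"
      using mu_eq by (auto simp: A_def Y_def not_le elim!: eventually_mono)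
    then show ?case
      using eventually_sequentially_Suc[of "\<lambda>n. \<bar>(\<Sum>i=1..n. g (X i \<omega>)) / real n - integral\<^sup>L N g\<bar> < e"] by blast
  qed
qed



lemma mean_lip:
  fixes g :: "real \<Rightarrow> real \<Rightarrow> real"
  assumes gL: "\<And>x s t. \<bar>g x s - g x t\<bar> \<le> Lc * \<bar>s - t\<bar>"
  shows "\<bar>(\<Sum>i=1..n. g (x i) s) / real n - (\<Sum>i=1..n. g (x i) t) / real n\<bar> \<le> Lc * \<bar>s - t\<bar>"
proof (cases "n = 0")
  case True
  have "0 \<le> Lc * \<bar>s - t\<bar>" using gL[of 0 s t] by linarith
  then show ?thesis using True by simp
next
  case False
  have "\<bar>(\<Sum>i=1..n. g (x i) s) - (\<Sum>i=1..n. g (x i) t)\<bar> = \<bar>\<Sum>i=1..n. g (x i) s - g (x i) t\<bar>"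
    by (simp add: sum_subtractf)
  also have "\<dots> \<le> (\<Sum>i=1..n. \<bar>g (x i) s - g (x i) t\<bar>)" by (rule sum_abs)
  also have "\<dots> \<le> (\<Sum>i=1..n. Lc * \<bar>s - t\<bar>)" by (intro sum_mono gL)
  also have "\<dots> = real n * (Lc * \<bar>s - t\<bar>)" by simp
  finally have "\<bar>(\<Sum>i=1..n. g (x i) s) - (\<Sum>i=1..n. g (x i) t)\<bar> / real n \<le> Lc * \<bar>s - t\<bar>"
    using False by (simp add: divide_le_eq mult.commute)
  then show ?thesis by (simp add: diff_divide_distrib[symmetric] abs_divide)
qed

lemma unif_neg:
  fixes M :: "'a measure" and X :: "nat \<Rightarrow> 'a \<Rightarrow> real" and N :: "real measure"
    and g :: "real \<Rightarrow> real \<Rightarrow> real"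
  assumes P: "prob_space M"
    and ind: "prob_space.indep_vars M (\<lambda>_. borel) X {1..}"
    and dist: "\<And>i. i \<ge> 1 \<Longrightarrow> distr M borel (X i) = N"
    and PN: "prob_space N" and sN: "sets N = sets borel"
    and gm: "\<And>t. (\<lambda>x. g x t) \<in> borel_measurable borel" and gB: "\<And>x t. \<bar>g x t\<bar> \<le> B"
    and gL: "\<And>x s t. \<bar>g x s - g x t\<bar> \<le> Lc * \<bar>s - t\<bar>" and Lc: "Lc > 0"
    and neg: "\<And>t. t \<in> {a..b} \<Longrightarrow> integral\<^sup>L N (\<lambda>x. g x t) < 0" and ab: "a \<le> b"
  shows "AE \<omega> in M. eventually (\<lambda>n. \<forall>t\<in>{a..b}. (\<Sum>i=1..n. g (X i \<omega>) t) / real n < 0) sequentially"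
proof -
  interpret N: prob_space N by (rule PN)
  define H where "H t = integral\<^sup>L N (\<lambda>x. g x t)" for t
  have gmN: "(\<lambda>x. g x t) \<in> borel_measurable N" for t
    using gm[of t] by (simp add: measurable_cong_sets[OF sN refl])
  have intg: "integrable N (\<lambda>x. g x t)" for t
    by (rule N.integrable_const_bound[where B=B]) (use gB gmN in auto)
  have HL: "\<bar>H s - H t\<bar> \<le> Lc * \<bar>s - t\<bar>" for s t
  proof -
    have "H s - H t = integral\<^sup>L N (\<lambda>x. g x s - g x t)"
      unfolding H_def using Bochner_Integration.integral_diff[OF intg[of s] intg[of t]] by simp
    also have "\<bar>\<dots>\<bar> \<le> integral\<^sup>L N (\<lambda>x. Lc * \<bar>s - t\<bar>)"
      by (rule integral_abs_bound_integral) (use intg gL in auto)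
    also have "\<dots> = Lc * \<bar>s - t\<bar>" using N.prob_space by simp
    finally show ?thesis .
  qed
  have "continuous_on {a..b} H"
  proof (rule lipschitz_on_continuous_on)
    show "Lc-lipschitz_on {a..b} H"
      by (rule lipschitz_onI) (use HL Lc in \<open>auto simp: dist_real_def\<close>)
  qed
  then obtain s0 where s0: "s0 \<in> {a..b}" "\<And>t. t \<in> {a..b} \<Longrightarrow> H t \<le> H s0"
    using continuous_attains_sup[of "{a..b}" H] ab by auto
  define \<delta> where "\<delta> = - H s0"
  have \<delta>: "\<delta> > 0" using neg[OF s0(1)] by (simp add: \<delta>_def H_def)
  define h where "h = \<delta> / (4 * Lc)"
  have h: "h > 0" using \<delta> Lc by (simp add: h_def)
  have Lch: "Lc * h = \<delta> / 4" using Lc by (simp add: h_def)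
  obtain F where F: "F \<subseteq> {a..b}" "finite F" "{a..b} \<subseteq> (\<Union>s\<in>F. ball s h)"
    using compactE_image[of "{a..b}" "{a..b}" "\<lambda>s. ball s h"] h by force
  have "AE \<omega> in M. \<forall>s\<in>F. eventually (\<lambda>n. \<bar>(\<Sum>i=1..n. g (X i \<omega>) s) / real n - H s\<bar> < \<delta> / 4) sequentially"
  proof (rule AE_finite_allI[OF F(2)])
    fix s assume "s \<in> F"
    show "AE \<omega> in M. eventually (\<lambda>n. \<bar>(\<Sum>i=1..n. g (X i \<omega>) s) / real n - H s\<bar> < \<delta> / 4) sequentially"
      unfolding H_def using slln_bounded[OF P ind dist gm gB, of "\<delta>/4"] \<delta> by simp
  qed
  then show ?thesis
  proof (eventually_elim)
    case (elim \<omega>)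
    then have "eventually (\<lambda>n. \<forall>s\<in>F. \<bar>(\<Sum>i=1..n. g (X i \<omega>) s) / real n - H s\<bar> < \<delta> / 4) sequentially"
      by (intro eventually_ball_finite F(2)) auto
    then show ?case
    proof (rule eventually_mono)
      fix n assume n: "\<forall>s\<in>F. \<bar>(\<Sum>i=1..n. g (X i \<omega>) s) / real n - H s\<bar> < \<delta> / 4"
      show "\<forall>t\<in>{a..b}. (\<Sum>i=1..n. g (X i \<omega>) t) / real n < 0"
      proof
        fix t assume t: "t \<in> {a..b}"
        then obtain s where s: "s \<in> F" "dist s t < h" using F(3) by auto
        have st: "\<bar>s - t\<bar> < h" using s(2) by (simp add: dist_real_def)
        have 1: "\<bar>(\<Sum>i=1..n. g (X i \<omega>) s) / real n - H s\<bar> < \<delta> / 4" using n s(1) by auto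
        have 2: "\<bar>(\<Sum>i=1..n. g (X i \<omega>) t) / real n - (\<Sum>i=1..n. g (X i \<omega>) s) / real n\<bar> \<le> Lc * \<bar>t - s\<bar>"
          by (rule mean_lip[OF gL])
        have 3: "\<bar>H s - H t\<bar> \<le> Lc * \<bar>s - t\<bar>" by (rule HL)
        have 4: "Lc * \<bar>s - t\<bar> \<le> Lc * h" using st Lc by (intro mult_left_mono) auto
        have 5: "H t \<le> - \<delta>" using s0(2)[OF t] by (simp add: \<delta>_def)
        show "(\<Sum>i=1..n. g (X i \<omega>) t) / real n < 0"
        proof -
          have a1: "(\<Sum>i=1..n. g (X i \<omega>) s) / real n < H s + \<delta> / 4" using 1 by (simp only: abs_less_iff) linarith
          have a2: "(\<Sum>i=1..n. g (X i \<omega>) t) / real n \<le> (\<Sum>i=1..n. g (X i \<omega>) s) / real n + Lc * \<bar>s - t\<bar>"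
            using 2 by (simp only: abs_le_iff abs_minus_commute[of t s]) linarith
          have a3: "H s \<le> H t + Lc * \<bar>s - t\<bar>" using 3 by (simp only: abs_le_iff) linarith
          show ?thesis using a1 a2 a3 4 5 Lch \<delta> by linarith
        qed
      qed
    qed
  qed
qed



lemma not_AE_False_lborel: "\<not> (AE x in (lborel :: real measure). False)"
proof
  assume "AE x in (lborel :: real measure). False"
  then have "ae_filter (lborel :: real measure) = bot" using trivial_limit_def by blast
  then have "emeasure (lborel :: real measure) (space lborel) = 0" by (simp add: ae_filter_eq_bot_iff)
  then show False by simp
qed

lemma nu_facts:
  assumes "prob_space (nu_m m)"
  shows "c_m m > 0" and "integrable lborel (\<lambda>x. (1 + x\<^sup>2) powr (- m))"
    and "sets (nu_m m) = sets borel"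
proof -
  interpret prob_space "nu_m m" by fact
  have sp: "space (nu_m m) = UNIV" by (simp add: nu_m_def)
  have e: "(\<integral>\<^sup>+x. ennreal (c_m m * (1 + x\<^sup>2) powr (- m)) \<partial>lborel) = 1"
  proof -
    have "emeasure (nu_m m) (space (nu_m m)) = 1" by (rule emeasure_space_1)
    then show ?thesis by (simp add: sp nu_m_def emeasure_density)
  qed
  show c: "c_m m > 0"
  proof (rule ccontr)
    assume "\<not> c_m m > 0"
    then have le: "\<And>x. c_m m * (1 + x\<^sup>2) powr (- m) \<le> 0"
      by (intro mult_nonpos_nonneg) auto
    have "(\<lambda>x. ennreal (c_m m * (1 + x\<^sup>2) powr (- m))) = (\<lambda>x. 0)"
      by (intro ext) (use le in \<open>simp add: ennreal_eq_0_iff\<close>)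
    then have "(\<integral>\<^sup>+x. ennreal (c_m m * (1 + x\<^sup>2) powr (- m)) \<partial>lborel) = 0"
      by simp
    with e show False by simp
  qed
  have "integrable lborel (\<lambda>x. c_m m * (1 + x\<^sup>2) powr (- m))"
    by (rule integrableI_nn_integral_finite[where x=1]) (use e c in auto)
  then show "integrable lborel (\<lambda>x. (1 + x\<^sup>2) powr (- m))" using c by simp
  show "sets (nu_m m) = sets borel" by (simp add: nu_m_def)
qed

lemma integral_nu:
  assumes "prob_space (nu_m m)" and h[measurable]: "h \<in> borel_measurable borel"
  shows "integral\<^sup>L (nu_m m) h = integral\<^sup>L lborel (\<lambda>x. c_m m * (1 + x\<^sup>2) powr (- m) * h x)"
proof -
  have c: "c_m m > 0" using nu_facts[OF assms(1)] by simp
  show ?thesis unfolding nu_m_def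
    by (subst integral_density) (use c in auto)
qed

lemma key_sign:
  fixes t u m :: real
  assumes "m > 0" "t \<noteq> 0" "u \<noteq> 0"
  shows "t * ((u / (1 + u\<^sup>2)) * ((1 + (t + u)\<^sup>2) powr (- m) - (1 + (t - u)\<^sup>2) powr (- m))) < 0"
proof -
  define \<Delta> where "\<Delta> = (1 + (t + u)\<^sup>2) powr (- m) - (1 + (t - u)\<^sup>2) powr (- m)"
  have diff: "(t + u)\<^sup>2 - (t - u)\<^sup>2 = 4 * (t * u)" by (simp add: power2_eq_square algebra_simps)
  have pos: "0 < 1 + (t - u)\<^sup>2" "0 < 1 + (t + u)\<^sup>2" by (simp_all add: add_pos_nonneg)
  have tu: "(t * u) * \<Delta> < 0"
  proof (cases "t * u > 0")
    case True
    then have "1 + (t - u)\<^sup>2 < 1 + (t + u)\<^sup>2" using diff by linarith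
    then have "\<Delta> < 0" unfolding \<Delta>_def using powr_less_mono2_neg[of "-m", OF _ pos(1)] assms(1) by simp
    then show ?thesis using True by (simp add: mult_pos_neg)
  next
    case False
    then have "t * u < 0" using assms by (simp add: not_less le_less)
    then have "1 + (t + u)\<^sup>2 < 1 + (t - u)\<^sup>2" using diff by linarith
    then have "\<Delta> > 0" unfolding \<Delta>_def using powr_less_mono2_neg[of "-m", OF _ pos(2)] assms(1) by simp
    then show ?thesis using \<open>t * u < 0\<close> by (simp add: mult_neg_pos)
  qed
  have "t * ((u / (1 + u\<^sup>2)) * \<Delta>) = ((t * u) * \<Delta>) / (1 + u\<^sup>2)" by simp
  also have "\<dots> < 0" using tu by (simp add: divide_neg_pos add_pos_nonneg)
  finally show ?thesis unfolding \<Delta>_def .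
qed

lemma G_sign:
  assumes P: "prob_space (nu_m m)" and m: "m > 1/2" and t: "t \<noteq> 0"
  shows "t * G_m m t < 0"
proof -
  define f where "f x = (1 + x\<^sup>2) powr (- m)" for x
  define k where "k x = f x * D x t" for x
  have c: "c_m m > 0" and fi: "integrable lborel f" using nu_facts[OF P] by (auto simp: f_def[abs_def])
  have km[measurable]: "k \<in> borel_measurable borel" by (simp add: k_def[abs_def] f_def[abs_def] D_def)
  have ki: "integrable lborel k"
  proof (rule Bochner_Integration.integrable_bound[OF fi])
    show "k \<in> borel_measurable lborel" by simp
    show "AE x in lborel. norm (k x) \<le> norm (f x)"
    proof (rule AE_I2)
      fix x
      have "\<bar>f x\<bar> * \<bar>D x t\<bar> \<le> \<bar>f x\<bar> * 1" using D_abs_le[of x t] by (intro mult_left_mono) auto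
      then show "norm (k x) \<le> norm (f x)" by (simp add: k_def abs_mult)
    qed
  qed
  have G: "G_m m t = c_m m * integral\<^sup>L lborel k"
  proof -
    have "G_m m t = integral\<^sup>L lborel (\<lambda>x. c_m m * (1 + x\<^sup>2) powr (- m) * D x t)"
      unfolding G_m_def by (rule integral_nu[OF P]) (simp add: D_def)
    also have "\<dots> = integral\<^sup>L lborel (\<lambda>x. c_m m * k x)"
      by (simp add: k_def f_def mult.assoc)
    finally show ?thesis by simp
  qed
  have i1: "integral\<^sup>L lborel k = integral\<^sup>L lborel (\<lambda>u. k (t + 1 * u))"
    using lborel_integral_real_affine[of 1 k t] by simp
  have i2: "integral\<^sup>L lborel k = integral\<^sup>L lborel (\<lambda>u. k (t + (-1) * u))"
    using lborel_integral_real_affine[of "-1" k t] by simp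
  have ki1: "integrable lborel (\<lambda>u. k (t + 1 * u))" by (rule lborel_integrable_real_affine[OF ki]) simp
  have ki2: "integrable lborel (\<lambda>u. k (t + (-1) * u))" by (rule lborel_integrable_real_affine[OF ki]) simp
  define j where "j u = t * (k (t + 1 * u) + k (t + (-1) * u))" for u
  have ji: "integrable lborel j" unfolding j_def using ki1 ki2 by simp
  have tI: "2 * (t * integral\<^sup>L lborel k) = integral\<^sup>L lborel j"
  proof -
    have "integral\<^sup>L lborel j = t * (integral\<^sup>L lborel (\<lambda>u. k (t + 1 * u)) + integral\<^sup>L lborel (\<lambda>u. k (t + (-1) * u)))"
      unfolding j_def using Bochner_Integration.integral_add[OF ki1 ki2] by simp
    then show ?thesis using i1 i2 by simp
  qed
  have jneg: "j u < 0" if "u \<noteq> 0" for u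
  proof -
    have "j u = t * ((u / (1 + u\<^sup>2)) * ((1 + (t + u)\<^sup>2) powr (- m) - (1 + (t - u)\<^sup>2) powr (- m)))"
      unfolding j_def k_def f_def D_def by (simp add: power2_eq_square algebra_simps add_divide_distrib diff_divide_distrib)
    also have "\<dots> < 0" by (rule key_sign) (use m t that in auto)
    finally show ?thesis .
  qed
  have "integral\<^sup>L lborel j < 0"
  proof (rule ccontr)
    assume "\<not> integral\<^sup>L lborel j < 0"
    moreover have "integral\<^sup>L lborel (\<lambda>u. - j u) \<ge> 0"
      by (rule integral_nonneg_AE) (use AE_lborel_singleton[of 0] jneg in \<open>auto elim!: eventually_mono simp: less_imp_le\<close>)
    ultimately have "integral\<^sup>L lborel (\<lambda>u. - j u) = 0" by simp
    then have "AE u in lborel. - j u = 0"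
      by (subst (asm) integral_nonneg_eq_0_iff_AE) 
         (use ji AE_lborel_singleton[of 0] jneg in \<open>auto elim!: eventually_mono simp: less_imp_le\<close>)
    from this AE_lborel_singleton[of 0] have "AE u in (lborel :: real measure). False"
    proof eventually_elim
      case (elim u) then show False using jneg[of u] by simp
    qed
    then show False using not_AE_False_lborel by blast
  qed
  then have "t * integral\<^sup>L lborel k < 0" using tI by simp
  then have "c_m m * (t * integral\<^sup>L lborel k) < 0" using c by (simp add: mult_pos_neg)
  then show ?thesis using G by (simp add: mult.left_commute)
qed



lemma deriv_seq:
  fixes f :: "real \<Rightarrow> real"
  assumes "(f has_real_derivative d) (at t)"
  shows "(\<lambda>k. (f (t + inverse (real (Suc k))) - f t) / inverse (real (Suc k))) \<longlonglongrightarrow> d"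
proof -
  have lim: "((\<lambda>h. (f (t + h) - f t) / h) \<longlongrightarrow> d) (at 0)" using assms by (simp add: DERIV_def)
  have fl: "filterlim (\<lambda>k. inverse (real (Suc k))) (at 0) sequentially"
    unfolding filterlim_at using LIMSEQ_inverse_real_of_nat by auto
  show ?thesis using filterlim_compose[OF lim fl] by (simp add: o_def)
qed

lemma deriv_identify:
  assumes P: "prob_space (nu_m m)"
    and dG: "(G_m m has_real_derivative d) (at t)"
  shows "integral\<^sup>L (nu_m m) (\<lambda>x. phi (x - t)) = d"
proof -
  let ?N = "nu_m m"
  interpret N: prob_space ?N by (rule P)
  have sN: "sets ?N = sets borel" using nu_facts[OF P] by simp
  have Dm: "(\<lambda>x. D x s) \<in> borel_measurable ?N" for s
    by (simp add: measurable_cong_sets[OF sN refl] D_def)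
  have Di: "integrable ?N (\<lambda>x. D x s)" for s
    by (rule N.integrable_const_bound[where B=1]) (use D_abs_le Dm in auto)
  define h where "h k = inverse (real (Suc k))" for k
  have hnz: "h k \<noteq> 0" for k by (simp add: h_def)
  define s where "s k x = (D x (t + h k) - D x t) / h k" for k x
  have Q: "(G_m m (t + h k) - G_m m t) / h k = integral\<^sup>L ?N (s k)" for k
    unfolding s_def G_m_def using Bochner_Integration.integral_diff[OF Di Di, of "t + h k" t]
    by (simp add: integral_divide_zero)
  have lim1: "(\<lambda>k. integral\<^sup>L ?N (s k)) \<longlonglongrightarrow> d"
    using deriv_seq[OF dG] unfolding Q[symmetric] h_def .
  have lim2: "(\<lambda>k. integral\<^sup>L ?N (s k)) \<longlonglongrightarrow> integral\<^sup>L ?N (\<lambda>x. phi (x - t))"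
  proof (rule integral_dominated_convergence[where w="\<lambda>_. 1"])
    show "(\<lambda>x. phi (x - t)) \<in> borel_measurable ?N"
      by (simp add: measurable_cong_sets[OF sN refl] phi_def)
    show "s k \<in> borel_measurable ?N" for k
      unfolding s_def[abs_def] using Dm by measurable
    show "integrable ?N (\<lambda>_. 1::real)" by simp
    show "AE x in ?N. (\<lambda>k. s k x) \<longlonglongrightarrow> phi (x - t)"
      using deriv_seq[OF D_deriv] by (simp add: s_def h_def)
    show "AE x in ?N. norm (s k x) \<le> 1" for k
    proof (rule AE_I2)
      fix x
      have "\<bar>D x (t + h k) - D x t\<bar> \<le> 1 * \<bar>h k\<bar>" using D_lip[of x "t + h k" t] by simp
      then show "norm (s k x) \<le> 1" using hnz[of k] by (simp add: s_def abs_divide divide_le_eq)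
    qed
  qed
  show ?thesis using LIMSEQ_unique[OF lim2 lim1] .
qed



lemma ln_term_deriv: "((\<lambda>t. ln (1 + (x - t)\<^sup>2)) has_real_derivative (-2 * D x t)) (at t)"
proof -
  have p: "0 < 1 + (x - t)\<^sup>2" by (simp add: add_pos_nonneg)
  have g: "((\<lambda>t. 1 + (x-t)\<^sup>2) has_real_derivative (2 * (x - t) * (-1))) (at t)"
    by (rule derivative_eq_intros refl | simp)+
  have "((\<lambda>t. ln (1 + (x - t)\<^sup>2)) has_real_derivative (1 / (1 + (x - t)\<^sup>2)) * (2 * (x - t) * (-1))) (at t)"
    by (rule DERIV_chain2[OF DERIV_ln_divide[OF p] g])
  moreover have "(1 / (1 + (x - t)\<^sup>2)) * (2 * (x - t) * (-1)) = -2 * D x t"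
    by (simp add: D_def)
  ultimately show ?thesis by simp
qed

lemma L_deriv:
  "((\<lambda>t. L_n X n t \<omega>) has_real_derivative (-2 * ((\<Sum>i=1..n. D (X i \<omega>) t) / real n))) (at t)"
proof -
  have "((\<lambda>t. (1 / real n) * (\<Sum>i=1..n. ln (1 + (X i \<omega> - t)\<^sup>2))) has_real_derivative
      (1 / real n) * (\<Sum>i=1..n. -2 * D (X i \<omega>) t)) (at t)"
    by (intro DERIV_cmult DERIV_sum ln_term_deriv)
  moreover have "(1 / real n) * (\<Sum>i=1..n. -2 * D (X i \<omega>) t) = -2 * ((\<Sum>i=1..n. D (X i \<omega>) t) / real n)"
    by (simp add: sum_distrib_left[symmetric] sum_negf)
  ultimately show ?thesis unfolding L_n_def by simp
qed

lemma S_deriv: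
  "((\<lambda>t. (\<Sum>i=1..n. D (X i \<omega>) t) / real n) has_real_derivative ((\<Sum>i=1..n. phi (X i \<omega> - t)) / real n)) (at t)"
proof -
  have "((\<lambda>t. (\<Sum>i=1..n. D (X i \<omega>) t) * (1 / real n)) has_real_derivative ((\<Sum>i=1..n. phi (X i \<omega> - t)) * (1 / real n))) (at t)"
    by (intro DERIV_cmult_right DERIV_sum D_deriv)
  then show ?thesis by simp
qed

lemma deterministic:
  fixes X :: "nat \<Rightarrow> 'a \<Rightarrow> real"
  assumes r: "0 < r" "r < T"
   and a: "\<forall>t\<in>{-r..r}. (\<Sum>i=1..n. phi (X i \<omega> - t)) / real n < 0"
   and b1: "\<forall>t\<in>{r..T}. (\<Sum>i=1..n. D (X i \<omega>) t) / real n < 0"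
   and b2: "\<forall>t\<in>{-T..-r}. (\<Sum>i=1..n. - D (X i \<omega>) t) / real n < 0"
   and c: "\<forall>t. \<bar>t\<bar> \<ge> T \<longrightarrow> L_n X n t \<omega> > L_n X n 0 \<omega>"
  shows "\<exists>!t. t \<in> C_Q X n \<omega> \<inter> {-r..r}"
proof -
  define LL where "LL t = L_n X n t \<omega>" for t
  define S where "S t = (\<Sum>i=1..n. D (X i \<omega>) t) / real n" for t
  have dL: "(LL has_real_derivative (-2 * S t)) (at t)" for t
    unfolding LL_def[abs_def] S_def using L_deriv .
  have dS: "(S has_real_derivative ((\<Sum>i=1..n. phi (X i \<omega> - t)) / real n)) (at t)" for t
    unfolding S_def[abs_def] using S_deriv .
  have contL: "continuous_on {-T..T} LL"
    by (intro continuous_at_imp_continuous_on ballI DERIV_isCont[OF dL])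
  obtain t0 where t0: "t0 \<in> {-T..T}" "\<And>s. s \<in> {-T..T} \<Longrightarrow> LL t0 \<le> LL s"
    using continuous_attains_inf[OF compact_Icc _ contL] r by auto
  have glob: "LL t0 \<le> LL s" for s
  proof (cases "\<bar>s\<bar> \<ge> T")
    case True
    then have "LL s > LL 0" using c by (simp add: LL_def)
    moreover have "LL t0 \<le> LL 0" using t0(2)[of 0] r by simp
    ultimately show ?thesis by simp
  next
    case False
    then have "s \<in> {-T..T}" by (auto simp: abs_less_iff not_le)
    then show ?thesis using t0(2)[of s] by simp
  qed
  have t0r: "t0 \<in> {-r..r}"
  proof (rule ccontr)
    assume "t0 \<notin> {-r..r}"
    then consider "t0 > r" | "t0 < -r" by fastforce
    then show False
    proof cases
      case 1
      have "LL r < LL t0"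
      proof (rule DERIV_pos_imp_increasing[OF 1])
        fix y assume "r \<le> y" "y \<le> t0"
        then have "S y < 0" using b1 t0(1) by (auto simp: S_def)
        then show "\<exists>z. DERIV LL y :> z \<and> z > 0" using dL[of y] by (intro exI[of _ "-2 * S y"]) auto
      qed
      then show False using glob[of r] by simp
    next
      case 2
      have "LL t0 > LL (-r)"
      proof (rule DERIV_neg_imp_decreasing[OF 2])
        fix y assume "t0 \<le> y" "y \<le> -r"
        then have "(\<Sum>i=1..n. - D (X i \<omega>) y) / real n < 0" using b2 t0(1) by auto
        then have "S y > 0" by (simp add: S_def sum_negf)
        then show "\<exists>z. DERIV LL y :> z \<and> z < 0" using dL[of y] by (intro exI[of _ "-2 * S y"]) auto
      qed
      then show False using glob[of "-r"] by simp
    qed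
  qed
  have crit: "S t = 0" if "\<forall>s. LL t \<le> LL s" for t
  proof -
    have "-2 * S t = 0"
      by (rule DERIV_local_min[OF dL, of 1]) (use that in auto)
    then show ?thesis by simp
  qed
  have uniq: "t1 = t2" if "t1 \<in> {-r..r}" "t2 \<in> {-r..r}" "\<forall>s. LL t1 \<le> LL s" "\<forall>s. LL t2 \<le> LL s" for t1 t2
  proof (rule ccontr)
    have dec: "S a > S b" if "a < b" "a \<in> {-r..r}" "b \<in> {-r..r}" for a b
    proof (rule DERIV_neg_imp_decreasing[OF that(1)])
      fix y assume "a \<le> y" "y \<le> b"
      then have "y \<in> {-r..r}" using that by auto
      then show "\<exists>z. DERIV S y :> z \<and> z < 0" using a dS[of y] by blast
    qed
    assume "t1 \<noteq> t2"
    then consider "t1 < t2" | "t2 < t1" by linarith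
    then show False
    proof cases
      case 1 then show False using dec[OF 1 that(1,2)] crit[OF that(3)] crit[OF that(4)] by simp
    next
      case 2 then show False using dec[OF 2 that(2,1)] crit[OF that(3)] crit[OF that(4)] by simp
    qed
  qed
  show ?thesis
  proof (rule ex1I[of _ t0])
    show "t0 \<in> C_Q X n \<omega> \<inter> {-r..r}" using glob t0r by (simp add: C_Q_def LL_def)
    fix t assume "t \<in> C_Q X n \<omega> \<inter> {-r..r}"
    then show "t = t0" using uniq[of t t0] glob t0r by (simp add: C_Q_def LL_def)
  qed
qed



lemma term_lower_in:
  fixes x t K :: real
  assumes "\<bar>x\<bar> \<le> K" "\<bar>t\<bar> \<ge> 2 * K"
  shows "ln (1 + (x - t)\<^sup>2) - ln (1 + x\<^sup>2) \<ge> ln ((1 + t\<^sup>2) / (4 * (1 + K\<^sup>2)))"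
proof -
  have K: "K \<ge> 0" using assms(1) by linarith
  have "\<bar>x - t\<bar> \<ge> \<bar>t\<bar> / 2" using assms by linarith
  then have "(\<bar>t\<bar> / 2)\<^sup>2 \<le> \<bar>x - t\<bar>\<^sup>2" by (intro power_mono) auto
  then have h1: "t\<^sup>2 \<le> 4 * (x - t)\<^sup>2" by (simp add: power_divide)
  have h2: "x\<^sup>2 \<le> K\<^sup>2" using assms(1) K by (metis abs_le_square_iff abs_of_nonneg)
  have p1: "0 < 1 + (x - t)\<^sup>2" "0 < 1 + x\<^sup>2" "0 < 1 + t\<^sup>2" "0 < 1 + K\<^sup>2" by (simp_all add: add_pos_nonneg)
  have "(1 + t\<^sup>2) / (4 * (1 + K\<^sup>2)) \<le> (1 + (x - t)\<^sup>2) / (1 + x\<^sup>2)"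
  proof -
    have "(1 + t\<^sup>2) * (1 + x\<^sup>2) \<le> (4 * (1 + (x - t)\<^sup>2)) * (1 + K\<^sup>2)"
      using h1 h2 p1 by (intro mult_mono) auto
    also have "\<dots> = (1 + (x - t)\<^sup>2) * (4 * (1 + K\<^sup>2))" by (simp only: mult_ac)
    finally have "(1 + t\<^sup>2) * (1 + x\<^sup>2) \<le> (1 + (x - t)\<^sup>2) * (4 * (1 + K\<^sup>2))" .
    then show ?thesis using p1 by (subst frac_le_eq) (auto simp: divide_nonpos_pos)
  qed
  then have "ln ((1 + t\<^sup>2) / (4 * (1 + K\<^sup>2))) \<le> ln ((1 + (x - t)\<^sup>2) / (1 + x\<^sup>2))"
    using p1 by (intro ln_mono) auto
  also have "\<dots> = ln (1 + (x - t)\<^sup>2) - ln (1 + x\<^sup>2)" using p1 by (simp add: ln_div)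
  finally show ?thesis .
qed

lemma term_lower_all:
  fixes x t :: real
  shows "ln (1 + (x - t)\<^sup>2) - ln (1 + x\<^sup>2) \<ge> - ln (2 * (1 + t\<^sup>2))"
proof -
  have p1: "0 < 1 + (x - t)\<^sup>2" "0 < 1 + x\<^sup>2" "0 < 1 + t\<^sup>2" by (simp_all add: add_pos_nonneg)
  have sq: "x\<^sup>2 \<le> 2 * t\<^sup>2 + 2 * (x - t)\<^sup>2"
  proof -
    have "0 \<le> (t - (x - t))\<^sup>2" by simp
    then show ?thesis by (simp add: power2_eq_square algebra_simps)
  qed
  have "1 + x\<^sup>2 \<le> 2 * (1 + t\<^sup>2) * (1 + (x - t)\<^sup>2)"
  proof -
    have "0 \<le> t\<^sup>2 * (x - t)\<^sup>2" by simp
    moreover have "2 * (1 + t\<^sup>2) * (1 + (x - t)\<^sup>2) = 2 + 2 * t\<^sup>2 + 2 * (x - t)\<^sup>2 + 2 * (t\<^sup>2 * (x - t)\<^sup>2)"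
      by (simp add: algebra_simps)
    ultimately show ?thesis using sq by linarith
  qed
  then have "ln (1 + x\<^sup>2) \<le> ln (2 * (1 + t\<^sup>2) * (1 + (x - t)\<^sup>2))" using p1 by (intro ln_mono) auto
  also have "\<dots> = ln (2 * (1 + t\<^sup>2)) + ln (1 + (x - t)\<^sup>2)" using p1 by (simp add: ln_mult)
  finally show ?thesis by simp
qed

lemma alg_helper:
  fixes a k :: real
  assumes "0 < a" "0 < k"
  shows "(a / (4 * k)) ^ 3 / (2 * a) = a\<^sup>2 / (128 * k ^ 3)"
  using assms by (simp add: power_divide power3_eq_cube power2_eq_square field_simps)

lemma tail_det:
  fixes X :: "nat \<Rightarrow> 'a \<Rightarrow> real" and K :: real
  assumes K: "K \<ge> 0" and n: "n \<ge> 1"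
    and frac: "(\<Sum>i=1..n. indicator {-K..K} (X i \<omega>)) / real n > 3 / 4"
    and t: "\<bar>t\<bar> \<ge> 2 * K + 128 * (1 + K\<^sup>2) ^ 3 + 1"
  shows "L_n X n t \<omega> > L_n X n 0 \<omega>"
proof -
  define A where "A = ln ((1 + t\<^sup>2) / (4 * (1 + K\<^sup>2)))"
  define B where "B = ln (2 * (1 + t\<^sup>2))"
  define p where "p = (\<Sum>i=1..n. indicator {-K..K} (X i \<omega>) :: real)"
  have pt: "0 < 1 + t\<^sup>2" "0 < 1 + K\<^sup>2" by (simp_all add: add_pos_nonneg)
  have tK: "\<bar>t\<bar> \<ge> 2 * K" using t K by (smt (verit) zero_le_power)
  have W: "\<bar>t\<bar> > 128 * (1 + K\<^sup>2) ^ 3" using t K by linarith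
  have at: "\<bar>t\<bar> \<le> 1 + t\<^sup>2" by (rule abs_le_1_sq)
  have a1: "1 + t\<^sup>2 \<le> (1 + t\<^sup>2)\<^sup>2" by (rule self_le_power) auto
  have big: "(1 + t\<^sup>2)\<^sup>2 > 128 * (1 + K\<^sup>2) ^ 3" using W at a1 by linarith
  have k1: "1 \<le> (1 + K\<^sup>2) ^ 3" by (rule one_le_power) simp
  have k2: "1 + K\<^sup>2 \<le> (1 + K\<^sup>2) ^ 3" by (rule self_le_power) auto
  have A0: "A \<ge> 0"
  proof -
    have e1: "4 * (1 + K\<^sup>2) \<le> 4 * (1 + K\<^sup>2) ^ 3" using k2 by simp
    have e2: "4 * (1 + K\<^sup>2) ^ 3 \<le> 128 * (1 + K\<^sup>2) ^ 3" using k1 by simp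
    have "4 * (1 + K\<^sup>2) \<le> 1 + t\<^sup>2" using W at e1 e2 by linarith
    then show ?thesis unfolding A_def using pt by (simp add: ln_ge_zero_iff le_divide_eq)
  qed
  have B0: "B > 0" unfolding B_def using pt by (simp add: add_pos_nonneg)
  have AB: "3 * A - B > 0"
  proof -
    have "3 * A - B = ln (((1 + t\<^sup>2) / (4 * (1 + K\<^sup>2))) ^ 3 / (2 * (1 + t\<^sup>2)))"
      unfolding A_def B_def using pt by (simp add: ln_div ln_realpow)
    also have "((1 + t\<^sup>2) / (4 * (1 + K\<^sup>2))) ^ 3 / (2 * (1 + t\<^sup>2)) = (1 + t\<^sup>2)\<^sup>2 / (128 * (1 + K\<^sup>2) ^ 3)"
      using pt by (rule alg_helper)
    also have "ln \<dots> > 0" using big pt by (simp add: ln_gt_zero)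
    finally show ?thesis .
  qed
  have trm: "ln (1 + (X i \<omega> - t)\<^sup>2) - ln (1 + (X i \<omega>)\<^sup>2) \<ge>
      indicator {-K..K} (X i \<omega>) * A - (1 - indicator {-K..K} (X i \<omega>)) * B" for i
  proof (cases "X i \<omega> \<in> {-K..K}")
    case True
    then have "\<bar>X i \<omega>\<bar> \<le> K" by auto
    then show ?thesis using term_lower_in[OF _ tK] True by (simp add: A_def)
  next
    case False
    then show ?thesis using term_lower_all[where x="X i \<omega>" and t=t] by (simp add: B_def)
  qed
  have "(\<Sum>i=1..n. ln (1 + (X i \<omega> - t)\<^sup>2)) - (\<Sum>i=1..n. ln (1 + (X i \<omega> - 0)\<^sup>2))
      = (\<Sum>i=1..n. ln (1 + (X i \<omega> - t)\<^sup>2) - ln (1 + (X i \<omega>)\<^sup>2))"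
    by (simp add: sum_subtractf)
  also have "\<dots> \<ge> (\<Sum>i=1..n. indicator {-K..K} (X i \<omega>) * A - (1 - indicator {-K..K} (X i \<omega>)) * B)"
    by (intro sum_mono trm)
  also have "(\<Sum>i=1..n. indicator {-K..K} (X i \<omega>) * A - (1 - indicator {-K..K} (X i \<omega>)) * B) = p * A - (real n - p) * B"
    by (simp add: p_def sum_subtractf sum_distrib_right[symmetric] left_diff_distrib)
  finally have S: "(\<Sum>i=1..n. ln (1 + (X i \<omega> - t)\<^sup>2)) - (\<Sum>i=1..n. ln (1 + (X i \<omega> - 0)\<^sup>2)) \<ge> p * A - (real n - p) * B" .
  have n0: "real n > 0" using n by simp
  have pn: "p > 3 / 4 * real n" using frac n0 by (simp add: p_def field_simps)
  have "p * A \<ge> (3 / 4 * real n) * A" using pn A0 by (intro mult_right_mono) auto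
  moreover have "(real n - p) * B < (1 / 4 * real n) * B" using pn B0 by (intro mult_strict_right_mono) auto
  moreover have "(3 / 4 * real n) * A - (1 / 4 * real n) * B = real n / 4 * (3 * A - B)" by (simp add: algebra_simps)
  moreover have "real n / 4 * (3 * A - B) > 0" using n0 AB by simp
  ultimately have "p * A - (real n - p) * B > 0" by linarith
  with S have "(\<Sum>i=1..n. ln (1 + (X i \<omega> - t)\<^sup>2)) - (\<Sum>i=1..n. ln (1 + (X i \<omega> - 0)\<^sup>2)) > 0" by linarith
  then show ?thesis unfolding L_n_def using n0 by (simp add: divide_simps)
qed



theorem proposition3p4:
  fixes M :: "'a measure" and X :: "nat \<Rightarrow> 'a \<Rightarrow> real" and m r :: real
  assumes "prob_space M"
    and "m > 1/2"
    and "prob_space.indep_vars M (\<lambda>_. borel) X {1..}"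
    and "\<And>i. i \<ge> 1 \<Longrightarrow> distr M borel (X i) = nu_m m"
    and "0 < r" and "r < 1"
    and "\<And>t. t \<in> {-r..r} \<Longrightarrow> \<exists>d. (G_m m has_real_derivative d) (at t) \<and> d < 0"
  shows "AE \<omega> in M. \<exists>N::nat. \<forall>n>N. \<exists>!t. t \<in> C_Q X n \<omega> \<inter> {-r..r}"
proof -
  note P = assms(1) and m = assms(2) and ind = assms(3) and dist = assms(4)
    and r = assms(5,6) and hd = assms(7)
  interpret prob_space M by (rule P)
  let ?N = "nu_m m"
  have rv1[measurable]: "X 1 \<in> borel_measurable M"
    using ind unfolding indep_vars_def by auto
  have PN: "prob_space ?N"
    using prob_space_distr[OF rv1] dist[of 1] by simp
  interpret N: prob_space ?N by (rule PN)
  have sN: "sets ?N = sets borel" using nu_facts[OF PN] by simp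
  have spN: "space ?N = UNIV" by (simp add: nu_m_def)
  obtain K :: real where K: "K \<ge> 0" "measure ?N {-K..K} > 3/4"
  proof -
    define A where "A k = {- real k..real k}" for k
    have "(\<lambda>k. emeasure ?N (A k)) \<longlonglongrightarrow> emeasure ?N (\<Union>k. A k)"
      by (rule Lim_emeasure_incseq) (auto simp: A_def sN incseq_def)
    moreover have "(\<Union>k. A k) = space ?N"
    proof -
      have "x \<in> (\<Union>k. A k)" for x
      proof -
        obtain k where "\<bar>x\<bar> \<le> real k" using real_arch_simple by blast
        then have "x \<in> A k" by (auto simp: A_def abs_le_iff)
        then show ?thesis by blast
      qed
      then show ?thesis by (auto simp: spN)
    qed
    ultimately have "(\<lambda>k. emeasure ?N (A k)) \<longlonglongrightarrow> 1" using N.emeasure_space_1 by simp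
    then have "eventually (\<lambda>k. emeasure ?N (A k) > ennreal (3/4)) sequentially"
      by (rule order_tendstoD(1)) (rule ennreal_less_one_iff[THEN iffD2], simp)
    then obtain k where "emeasure ?N (A k) > ennreal (3/4)" by (auto simp: eventually_sequentially)
    then have "ennreal (3/4) < ennreal (measure ?N (A k))" by (simp add: N.emeasure_eq_measure)
    then have "measure ?N (A k) > 3/4" by (subst (asm) ennreal_less_iff) auto
    then show ?thesis using that[of "real k"] by (simp add: A_def)
  qed
  define T where "T = 2 * K + 128 * (1 + K\<^sup>2) ^ 3 + 1"
  have T: "T > 1"
  proof -
    have "0 < (1 + K\<^sup>2) ^ 3" by (simp add: add_pos_nonneg)
    then show ?thesis unfolding T_def using K(1) by linarith
  qed
  have a1: "(\<lambda>x. phi (x - t)) \<in> borel_measurable borel" for t by (simp add: phi_def)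
  have a4: "integral\<^sup>L ?N (\<lambda>x. phi (x - t)) < 0" if "t \<in> {-r..r}" for t
    using hd[OF that] deriv_identify[OF PN] by blast
  have Ea: "AE \<omega> in M. eventually (\<lambda>n. \<forall>t\<in>{-r..r}. (\<Sum>i=1..n. phi (X i \<omega> - t)) / real n < 0) sequentially"
    by (rule unif_neg[where g="\<lambda>x t. phi (x - t)" and B=1 and Lc=6 and N="nu_m m"])
       (fact P ind dist PN sN a1 phi_abs_le phi_shift_lip a4 | (use r in simp))+
  have b1: "(\<lambda>x. D x t) \<in> borel_measurable borel" for t by (simp add: D_def)
  have b1': "(\<lambda>x. - D x t) \<in> borel_measurable borel" for t by (simp add: D_def)
  have b4: "integral\<^sup>L ?N (\<lambda>x. D x t) < 0" if "t \<in> {r..T}" for t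
  proof -
    have "t > 0" using that r by auto
    then have "t * G_m m t < 0" using G_sign[OF PN m] by simp
    then have "G_m m t < 0" using \<open>t > 0\<close> by (simp add: mult_less_0_iff)
    then show ?thesis by (simp add: G_m_def)
  qed
  have b4': "integral\<^sup>L ?N (\<lambda>x. - D x t) < 0" if "t \<in> {-T..-r}" for t
  proof -
    have "t < 0" using that r by auto
    then have "t * G_m m t < 0" using G_sign[OF PN m] by simp
    then have "G_m m t > 0" using \<open>t < 0\<close> by (simp add: mult_less_0_iff)
    then show ?thesis by (simp add: G_m_def)
  qed
  have b2': "\<bar>- D x t\<bar> \<le> 1" for x t using D_abs_le[of x t] by simp
  have b3': "\<bar>- D x s - - D x t\<bar> \<le> 1 * \<bar>s - t\<bar>" for x s t using D_lip[of x t s] by (simp add: abs_minus_commute)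
  have Eb1: "AE \<omega> in M. eventually (\<lambda>n. \<forall>t\<in>{r..T}. (\<Sum>i=1..n. D (X i \<omega>) t) / real n < 0) sequentially"
    by (rule unif_neg[where g="\<lambda>x t. D x t" and B=1 and Lc=1 and N="nu_m m"])
       (fact P ind dist PN sN b1 D_abs_le D_lip b4 | (use r T in simp))+
  have Eb2: "AE \<omega> in M. eventually (\<lambda>n. \<forall>t\<in>{-T..-r}. (\<Sum>i=1..n. - D (X i \<omega>) t) / real n < 0) sequentially"
    by (rule unif_neg[where g="\<lambda>x t. - D x t" and B=1 and Lc=1 and N="nu_m m"])
       (fact P ind dist PN sN b1' b2' b3' b4' | (use r T in simp))+
  have Ec: "AE \<omega> in M. eventually (\<lambda>n. (\<Sum>i=1..n. indicator {-K..K} (X i \<omega>)) / real n > (3/4::real)) sequentially"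
  proof -
    have ii: "integral\<^sup>L ?N (indicator {-K..K} :: real \<Rightarrow> real) = measure ?N {-K..K}"
      by (simp add: spN)
    have "AE \<omega> in M. eventually (\<lambda>n. \<bar>(\<Sum>i=1..n. indicator {-K..K} (X i \<omega>)) / real n - integral\<^sup>L ?N (indicator {-K..K} :: real \<Rightarrow> real)\<bar> < measure ?N {-K..K} - 3/4) sequentially"
      by (rule slln_bounded[OF P ind dist, where B=1]) (use K in auto)
    then show ?thesis unfolding ii
    proof (rule eventually_mono)
      fix \<omega> assume "eventually (\<lambda>n. \<bar>(\<Sum>i=1..n. indicator {-K..K} (X i \<omega>)) / real n - measure ?N {-K..K}\<bar> < measure ?N {-K..K} - 3/4) sequentially"
      then show "eventually (\<lambda>n. (\<Sum>i=1..n. indicator {-K..K} (X i \<omega>)) / real n > (3/4::real)) sequentially"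
      proof (rule eventually_mono)
        fix n assume "\<bar>(\<Sum>i=1..n. indicator {-K..K} (X i \<omega>)) / real n - measure ?N {-K..K}\<bar> < measure ?N {-K..K} - (3/4::real)"
        then show "(\<Sum>i=1..n. indicator {-K..K} (X i \<omega>)) / real n > (3/4::real)"
          by (simp only: abs_less_iff) linarith
      qed
    qed
  qed
  from Ea Eb1 Eb2 Ec show ?thesis
  proof eventually_elim
    case (elim \<omega>)
    have "eventually (\<lambda>n. n \<ge> 1 \<and> (\<forall>t\<in>{-r..r}. (\<Sum>i=1..n. phi (X i \<omega> - t)) / real n < 0)
        \<and> (\<forall>t\<in>{r..T}. (\<Sum>i=1..n. D (X i \<omega>) t) / real n < 0)
        \<and> (\<forall>t\<in>{-T..-r}. (\<Sum>i=1..n. - D (X i \<omega>) t) / real n < 0)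
        \<and> (\<Sum>i=1..n. indicator {-K..K} (X i \<omega>)) / real n > (3/4::real)) sequentially"
      by (intro eventually_conj eventually_ge_at_top elim(1) elim(2) elim(3) elim(4))
    then obtain N0 where N0: "\<And>n. n \<ge> N0 \<Longrightarrow> n \<ge> 1 \<and> (\<forall>t\<in>{-r..r}. (\<Sum>i=1..n. phi (X i \<omega> - t)) / real n < 0)
        \<and> (\<forall>t\<in>{r..T}. (\<Sum>i=1..n. D (X i \<omega>) t) / real n < 0)
        \<and> (\<forall>t\<in>{-T..-r}. (\<Sum>i=1..n. - D (X i \<omega>) t) / real n < 0)
        \<and> (\<Sum>i=1..n. indicator {-K..K} (X i \<omega>)) / real n > (3/4::real)"
      by (auto simp: eventually_sequentially)
    show ?case
    proof (intro exI[of _ N0] allI impI)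
      fix n assume "n > N0"
      then have H: "n \<ge> 1" "\<forall>t\<in>{-r..r}. (\<Sum>i=1..n. phi (X i \<omega> - t)) / real n < 0"
        "\<forall>t\<in>{r..T}. (\<Sum>i=1..n. D (X i \<omega>) t) / real n < 0"
        "\<forall>t\<in>{-T..-r}. (\<Sum>i=1..n. - D (X i \<omega>) t) / real n < 0"
        "(\<Sum>i=1..n. indicator {-K..K} (X i \<omega>)) / real n > (3/4::real)"
        using N0[of n] by auto
      have c: "\<forall>t. \<bar>t\<bar> \<ge> T \<longrightarrow> L_n X n t \<omega> > L_n X n 0 \<omega>"
      proof (intro allI impI)
        fix t assume tT: "\<bar>t\<bar> \<ge> T"
        show "L_n X n t \<omega> > L_n X n 0 \<omega>"
          by (rule tail_det[where X=X and \<omega>=\<omega> and K=K and n=n and t=t, OF K(1) H(1) H(5)])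
             (use tT in \<open>simp add: T_def\<close>)
      qed
      show "\<exists>!t. t \<in> C_Q X n \<omega> \<inter> {-r..r}"
        by (rule deterministic[OF r(1) _ H(2) H(3) H(4) c]) (use r T in simp)
    qed
  qed
qed


end
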